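(* Let $\langle A,g\rangle$ be an interior algebra. If $A^*$ is a retract of $A$, then $A=A^*$.
   Context: An interior algebra is a Boolean algebra with an operator $g$ satisfying $g(1)=1$, $g(xy)=g(x)g(y)$, $g(x)\le x$, $gg(x)=g(x)$; $a$ is open if $g(a)=a$. $A^*$ denotes the subalgebra of $A$ generated by the open elements of $A$. $A^*$ is a retract of $A$ if there is a surjective homomorphism $p\colon A\to A^*$ whose restriction to $A^*$ is the identity. *)

theory Defs
  imports Main
begin

definition interior_algebra :: "('a::boolean_algebra \<Rightarrow> 'a) \<Rightarrow> bool" where
  "interior_algebra g \<longleftrightarrow>
     g top = top \<and>
     (\<forall>x y. g (inf x y) = inf (g x) (g y)) \<and>
     (\<forall>x. g x \<le> x) \<and>
     (\<forall>x. g (g x) = g x)"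

inductive_set star_alg :: "('a::boolean_algebra \<Rightarrow> 'a) \<Rightarrow> 'a set" for g where
  open_in: "g a = a \<Longrightarrow> a \<in> star_alg g"
| bot_in: "bot \<in> star_alg g"
| top_in: "top \<in> star_alg g"
| sup_in: "x \<in> star_alg g \<Longrightarrow> y \<in> star_alg g \<Longrightarrow> sup x y \<in> star_alg g"
| inf_in: "x \<in> star_alg g \<Longrightarrow> y \<in> star_alg g \<Longrightarrow> inf x y \<in> star_alg g"
| compl_in: "x \<in> star_alg g \<Longrightarrow> - x \<in> star_alg g"

definition star_retraction :: "('a::boolean_algebra \<Rightarrow> 'a) \<Rightarrow> ('a \<Rightarrow> 'a) \<Rightarrow> bool" where
  "star_retraction g p \<longleftrightarrow>
     (\<forall>x. p x \<in> star_alg g) \<and>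
     p ` UNIV = star_alg g \<and>
     (\<forall>x y. p (sup x y) = sup (p x) (p y)) \<and>
     (\<forall>x y. p (inf x y) = inf (p x) (p y)) \<and>
     (\<forall>x. p (- x) = - p x) \<and>
     p bot = bot \<and> p top = top \<and>
     (\<forall>x. p (g x) = g (p x)) \<and>
     (\<forall>y \<in> star_alg g. p y = y)"

end

theory Submission
  imports Defs
begin

theorem lemma4p4:
  fixes g :: "'a::boolean_algebra \<Rightarrow> 'a"
  assumes "interior_algebra g"
    and "\<exists>p. star_retraction g p"
  shows "star_alg g = UNIV"
proof -
  obtain p where P: "star_retraction g p" using assms(2) by blast
  have G: "g top = top" "\<And>x. g x \<le> x" "\<And>x. g (g x) = g x"
    using assms(1) unfolding interior_algebra_def by auto
  have in_s: "\<And>x. p x \<in> star_alg g" and psup: "\<And>x y. p (sup x y) = sup (p x) (p y)"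
    and pinf: "\<And>x y. p (inf x y) = inf (p x) (p y)" and cp: "\<And>x. p (- x) = - p x"
    and pg: "\<And>x. p (g x) = g (p x)" and fx: "\<And>y. y \<in> star_alg g \<Longrightarrow> p y = y"
    using P unfolding star_retraction_def by auto
  have "x \<in> star_alg g" for x
  proof -
    define y where "y = sup (inf x (- p x)) (inf (- x) (p x))"
    have pp: "p (p x) = p x" using fx in_s by blast
    have "p y = bot" unfolding y_def psup pinf cp pp by simp
    hence "p (- y) = top" using cp by simp
    hence "p (g (- y)) = top" using pg G by simp
    moreover have "p (g (- y)) = g (- y)" using fx star_alg.open_in G(3) by blast
    ultimately have "g (- y) = top" by simp
    hence "- y = top" using G(2) by (metis top.extremum_uniqueI)
    hence "y = bot" by (metis compl_bot_eq double_compl)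
    hence "inf x (- p x) = bot" "inf (- x) (p x) = bot" unfolding y_def by auto
    hence "x = p x" by (metis antisym inf_shunt double_compl inf_commute)
    thus ?thesis using in_s by metis
  qed
  thus ?thesis by blast
qed

end
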